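(* Let $b\ge 2$ be even and put $c_i=b^{n+i}+1$. If $n=1$ then $F(SC^{+}(b,1))=b^3-1$. If $n\ge 2$ then $\max\mathrm{Ap}(SC^{+}(b,n),c_0)=c_1+(b-1)c_n$ and $$F(SC^{+}(b,n)) = c_1+(b-1)c_n-c_0=(b-1)(b^{2n}+b^{n}+1).$$
   Context: For an even integer $b\ge2$ and $n\ge0$, $SC^{+}(b,n)=\langle\{b^{n+i}+1: i\in\mathbb{N}\}\rangle$ (submonoid of $(\mathbb{N},+)$ generated by these numbers, a numerical semigroup). $\mathrm{Ap}(S,x)=\{s\in S:s-x\notin S\}$; $F(S)$ is the greatest integer not in $S$. *)

theory Defs
  imports Main
begin

inductive_set monoid_gen :: "nat set \<Rightarrow> nat set" for A :: "nat set" where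
  zero: "0 \<in> monoid_gen A"
| add: "a \<in> A \<Longrightarrow> s \<in> monoid_gen A \<Longrightarrow> a + s \<in> monoid_gen A"

definition SCplus :: "nat \<Rightarrow> nat \<Rightarrow> nat set" where
  "SCplus b n = monoid_gen {b ^ (n + i) + 1 | i. True}"

definition Apery :: "nat set \<Rightarrow> nat \<Rightarrow> nat set" where
  "Apery S x = {s \<in> S. \<not> (\<exists>t\<in>S. int t = int s - int x)}"

definition Frobenius :: "nat set \<Rightarrow> int" where
  "Frobenius S = (GREATEST z :: int. z \<notin> int ` S)"

end

theory Submission
  imports Defs
begin


lemma mg_add: "x \<in> monoid_gen A \<Longrightarrow> y \<in> monoid_gen A \<Longrightarrow> x + y \<in> monoid_gen A"
  by (induction x rule: monoid_gen.induct) (auto simp: add.assoc intro: monoid_gen.add)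
lemma mg_gen: "a \<in> A \<Longrightarrow> a \<in> monoid_gen A"
  using monoid_gen.add[OF _ monoid_gen.zero] by fastforce
lemma mg_mult: "x \<in> monoid_gen A \<Longrightarrow> t * x \<in> monoid_gen A"
  by (induction t) (auto intro: mg_add monoid_gen.zero)

lemma gen_in: "b^(n+i)+1 \<in> SCplus b n"
  unfolding SCplus_def by (rule mg_gen) blast

lemma S_add: "x \<in> SCplus b n \<Longrightarrow> y \<in> SCplus b n \<Longrightarrow> x + y \<in> SCplus b n"
  unfolding SCplus_def by (rule mg_add)
lemma S_mult: "x \<in> SCplus b n \<Longrightarrow> t * x \<in> SCplus b n"
  unfolding SCplus_def by (rule mg_mult)

lemma split_lemma:
  assumes "b \<ge> 1"
  shows "s * (b-1) \<le> t * (b^i - 1) \<Longrightarrow> t * (b^(n+i)+1) + s*(b-1) \<in> SCplus b n"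
proof (induction i arbitrary: t s)
  case 0
  then have "s*(b-1) = 0" by simp
  moreover have "t * (b^(n+0)+1) \<in> SCplus b n" by (rule S_mult[OF gen_in])
  ultimately show ?case by (metis add.right_neutral)
next
  case (Suc i)
  define c' where "c' = b^(n+Suc i)+1"
  define c where "c = b^(n+i)+1"
  have id: "c' + (b-1) = b*c" using assms unfolding c_def c'_def by (simp add: algebra_simps)
  have P1: "b^i \<ge> 1" using assms by simp
  have gc': "c' \<in> SCplus b n" unfolding c'_def by (rule gen_in)
  have "t * c' + s*(b-1) \<in> SCplus b n"
  proof (cases "s \<le> t")
    case True
    then obtain d where d: "t = s + d" using le_Suc_ex by blast
    have "t * c' + s*(b-1) = d*c' + s*(c'+(b-1))"
      unfolding d by (simp add: distrib_left distrib_right)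
    also have "\<dots> = d*c' + ((s*b)*c + 0*(b-1))" using id by simp
    finally have "t * c' + s*(b-1) = d*c' + ((s*b)*c + 0*(b-1))" .
    moreover have "(s*b)*c + 0*(b-1) \<in> SCplus b n" using Suc.IH[of 0 "s*b"] unfolding c_def by simp
    ultimately show ?thesis using S_add[OF S_mult[OF gc']] by metis
  next
    case False
    then obtain d where d: "s = t + d" by (metis le_Suc_ex nat_le_linear)
    have "t * c' + s*(b-1) = t*(c'+(b-1)) + d*(b-1)"
      unfolding d by (simp add: distrib_left distrib_right)
    also have "\<dots> = (t*b)*c + d*(b-1)" using id by simp
    finally have "t * c' + s*(b-1) = (t*b)*c + d*(b-1)" .
    moreover have "d*(b-1) \<le> (t*b)*(b^i - 1)"
    proof -
      have "int (d*(b-1)) = int s * (int b - 1) - int t * (int b - 1)" using d assms by (simp add: of_nat_diff algebra_simps)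
      also have "int s * (int b - 1) \<le> int t * (int b * int b ^ i - 1)"
      proof -
        have "int (s * (b-1)) \<le> int (t * (b^Suc i - 1))" using Suc.prems by linarith
        moreover have "b^Suc i \<ge> 1" using assms by simp
        ultimately show ?thesis using assms by (simp add: of_nat_diff)
      qed
      finally have "int (d*(b-1)) \<le> int t * int b * (int b ^ i - 1)" by (simp add: algebra_simps)
      moreover have "int (t*b*(b^i-1)) = int t * int b * (int b^i - 1)" using P1 by (simp add: of_nat_diff)
      ultimately show ?thesis by linarith
    qed
    ultimately show ?thesis using Suc.IH unfolding c_def by metis
  qed
  thus ?case unfolding c'_def .
qed




lemma cover:
  fixes a B D h :: int
  assumes a1: "a \<ge> 1" and ah: "2*h = a+1" and dv: "a dvd B - 1" and Ba: "B \<ge> a+1"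
    and D1: "a*B + 1 \<le> D" and D2: "D \<le> a*B + B"
  shows "\<exists>j s. 1 \<le> j \<and> j \<le> a \<and> 0 \<le> s \<and> s \<le> B - 1 \<and> D = j*(B+1) + s*a"
proof -
  define j0 where "j0 = (D*h) mod a"
  define j where "j = (if j0 = 0 then a else j0)"
  have j0b: "0 \<le> j0" "j0 < a" using a1 unfolding j0_def by auto
  have j1: "1 \<le> j" "j \<le> a" using j0b a1 unfolding j_def by auto
  have "a dvd D*h - j0" unfolding j0_def by (simp add: mod_eq_dvd_iff minus_mod_eq_mult_div[symmetric])
  then have "a dvd 2*(D*h - j0)" by (rule dvd_mult)
  moreover have "D - 2*j0 = 2*(D*h - j0) - D*a" using ah by (simp add: algebra_simps)
  ultimately have "a dvd D - 2*j0" using dvd_diff[of a "2*(D*h - j0)" "D*a"] by (metis dvd_triv_right)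
  then have "a dvd D - 2*j" unfolding j_def by (auto simp: dvd_diff)
  moreover have "a dvd j*(B-1)" using dv by simp
  ultimately have "a dvd (D - 2*j) - j*(B-1)" by (rule dvd_diff)
  moreover have "(D - 2*j) - j*(B-1) = D - j*(B+1)" by (simp add: algebra_simps)
  ultimately obtain s where s: "D - j*(B+1) = a*s" by (metis dvdE)
  have "j*(B+1) \<ge> 1*(B+1)" using j1 Ba a1 by (intro mult_right_mono) auto
  hence "a*s < a*B" using s D2 by (simp add: algebra_simps)
  hence "s < B" using a1 mult_less_cancel_left_pos[of a s B] by simp
  hence sB: "s \<le> B - 1" by simp
  have "a*s > a*(-1)"
  proof (cases "j = a")
    case True thus ?thesis using s D1 by (simp add: algebra_simps)
  next
    case False
    hence "j \<le> a - 1" using j1 by simp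
    hence "j*(B+1) \<le> (a-1)*(B+1)" using Ba a1 by (intro mult_right_mono) auto
    thus ?thesis using s D1 Ba a1 by (simp add: algebra_simps)
  qed
  hence "-1 < s" using a1 mult_less_cancel_left_pos[of a "-1" s] by simp
  hence "s \<ge> 0" by simp
  show ?thesis using j1 sB \<open>s \<ge> 0\<close> s by (intro exI[of _ j] exI[of _ s]) (auto simp: algebra_simps)
qed



lemma pow_dvd: "(b::nat) \<ge> 1 \<Longrightarrow> (b-1) dvd (b^i - 1)"
proof (induction i)
  case 0 then show ?case by simp
next
  case (Suc i)
  have "b^Suc i - 1 = b*(b^i - 1) + (b - 1)" using Suc.prems
    by (simp add: algebra_simps)
  moreover have "(b-1) dvd (b*(b^i - 1) + (b - 1))" using Suc by (intro dvd_add) auto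
  ultimately show ?case by metis
qed

lemma inv_lemma:
  assumes b2: "b \<ge> 2" and n1: "n \<ge> 1" and m: "m \<in> SCplus b n"
  shows "\<exists>k N t. m = k + b^n*N \<and> k \<le> N \<and> (b-1) dvd (N - k) \<and> t \<le> k \<and> N mod b = t mod b \<and> (t = k \<longrightarrow> N = k)"
  using m unfolding SCplus_def
proof (induction m rule: monoid_gen.induct)
  case zero
  show ?case by (rule exI[of _ 0], rule exI[of _ 0], rule exI[of _ 0]) simp
next
  case (add g s)
  then obtain i where g: "g = b^(n+i)+1" by blast
  from add.IH obtain k N t where H: "s = k + b^n*N" "k \<le> N" "(b-1) dvd (N - k)" "t \<le> k"
     "N mod b = t mod b" "t = k \<longrightarrow> N = k" by blast
  have bi: "b^i \<ge> 1" using b2 by simp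
  have e: "g + s = (k+1) + b^n*(N + b^i)" using g H(1) by (simp add: algebra_simps power_add)
  have le: "k + 1 \<le> N + b^i" using H(2) bi by simp
  have "N + b^i - (k+1) = (N - k) + (b^i - 1)" using H(2) bi by simp
  moreover have "(b-1) dvd ((N - k) + (b^i - 1))" using H(3) pow_dvd[of b i] b2 by (intro dvd_add) auto
  ultimately have dv: "(b-1) dvd (N + b^i - (k+1))" by metis
  show ?case
  proof (cases "i = 0")
    case True
    have "(N + 1) mod b = (t + 1) mod b" using H(5) by (metis mod_add_left_eq)
    thus ?thesis using e le dv H True
      by (intro exI[of _ "k+1"] exI[of _ "N + b^i"] exI[of _ "t+1"]) auto
  next
    case False
    have "b dvd b^i" using False by simp
    hence "(N + b^i) mod b = N mod b" by (metis dvd_imp_mod_0 mod_add_right_eq add.right_neutral)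
    thus ?thesis using e le dv H False
      by (intro exI[of _ "k+1"] exI[of _ "N + b^i"] exI[of _ "t"]) auto
  qed
qed




lemma F_notin:
  assumes b2: "b \<ge> 2" and ev: "even b" and n1: "n \<ge> 1"
  shows "(b-1)*(b^n*b^n) + (b-1)*b^n + (b-1) \<notin> SCplus b n"
proof
  define a where "a = b - 1"
  define B where "B = b^n"
  assume "(b-1)*(b^n*b^n) + (b-1)*b^n + (b-1) \<in> SCplus b n"
  then obtain k N t where H: "(b-1)*(b^n*b^n) + (b-1)*b^n + (b-1) = k + b^n*N" "k \<le> N" "(b-1) dvd (N - k)" "t \<le> k"
     "N mod b = t mod b" "t = k \<longrightarrow> N = k" using inv_lemma[OF b2 n1] by blast
  have F: "a*B*B + a*B + a = k + B*N" using H(1) unfolding a_def B_def by (simp add: algebra_simps)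
  have bB: "b \<le> B" using power_increasing[of 1 n b] b2 n1 unfolding B_def by simp
  have a1: "a \<ge> 1" and aB: "a < B" using b2 bB unfolding a_def by auto
  have N1: "N \<le> a*B + a"
  proof (rule ccontr)
    assume "\<not> ?thesis"
    hence "B*(a*B + a + 1) \<le> B*N" by (intro mult_le_mono2) simp
    moreover have "B*(a*B+a+1) = a*B*B + a*B + B" by (simp add: algebra_simps)
    ultimately show False using F aB by linarith
  qed
  have N2: "N \<ge> a*B + 1"
  proof (rule ccontr)
    assume "\<not> ?thesis"
    hence "N \<le> a*B" by simp
    hence "B*N \<le> B*(a*B)" by (intro mult_le_mono2)
    moreover have "B*(a*B) = a*B*B" by (simp add: algebra_simps)
    ultimately show False using F H(2) \<open>N \<le> a*B\<close> a1 by linarith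
  qed
  define j where "j = N - a*B"
  have j: "1 \<le> j" "j \<le> a" "N = a*B + j" using N1 N2 unfolding j_def by auto
  have kj: "k + B*j = a*B + a" using F j(3) by (simp add: algebra_simps)
  have "int a dvd int (N - k)" using H(3) unfolding a_def by (simp only: of_nat_dvd_iff)
  hence "int a dvd int N - int k" using H(2) by (simp add: of_nat_diff)
  moreover have "int N - int k = int j * (int B + 1) - int a"
    using j(3) kj by (simp add: algebra_simps) (metis add.commute add_diff_cancel_left' of_nat_add of_nat_mult)
  ultimately have "int a dvd int j * (int B + 1)" by (metis dvd_add_right_iff dvd_refl diff_add_cancel)
  moreover have "int a dvd int B - 1" using pow_dvd[of b n] b2 unfolding a_def B_def
    by (metis of_nat_dvd_iff of_nat_1 of_nat_diff one_le_power le_trans one_le_numeral)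
  hence "int a dvd int j * (int B - 1)" by simp
  ultimately have "int a dvd int j * (int B + 1) - int j * (int B - 1)" by (rule dvd_diff)
  hence "int a dvd 2 * int j" by (simp add: algebra_simps)
  moreover have "odd a" using ev b2 unfolding a_def by simp
  hence "coprime (int a) 2" by (simp add: odd_iff_mod_2_eq_one coprime_commute)
  ultimately have "int a dvd int j" using coprime_dvd_mult_right_iff by blast
  hence "a dvd j" by simp
  hence "j = a" using j by (simp add: dvd_imp_le le_antisym)
  hence Nv: "N = a*B + a" and kv: "k = a" using j(3) kj by auto
  have "b dvd B" using n1 unfolding B_def by (simp add: dvd_power)
  hence "N mod b = a mod b" unfolding Nv by (metis dvd_mult mod_mult_self3 mult.commute dvd_def)
  moreover have "a < b" using b2 unfolding a_def by simp
  ultimately have "t mod b = a" using H(5) by simp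
  moreover have "t < b" using H(4) kv \<open>a < b\<close> by simp
  ultimately have "t = k" using kv by simp
  hence "N = k" using H(6) by simp
  thus False using Nv kv a1 aB by simp
qed




lemma window_in:
  assumes b2: "b \<ge> 2" and ev: "even b" and n1: "n \<ge> 1"
    and m1: "(b-1)*(b^n*b^n) + (b-1)*b^n + (b-1) < m"
    and m2: "m \<le> (b-1)*(b^n*b^n) + (b-1)*b^n + (b-1) + (b^n + 1)"
  shows "m \<in> SCplus b n"
proof -
  define a where "a = b - 1"
  define B where "B = b^n"
  have bB: "b \<le> B" using power_increasing[of 1 n b] b2 n1 unfolding B_def by simp
  have a1: "a \<ge> 1" and aB: "a + 1 \<le> B" and ba: "b = a + 1" using b2 bB unfolding a_def by auto
  have cn: "b^(n+n) + 1 = B*B + 1" unfolding B_def by (simp add: power_add)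
  define D where "D = m - a*(B*B+1)"
  have mD: "m = a*(B*B+1) + D" and D1: "a*B + 1 \<le> D" and D2: "D \<le> a*B + B + 1"
    using m1 m2 unfolding D_def a_def[symmetric] B_def[symmetric] by (auto simp: algebra_simps)
  have gn: "a*(B*B+1) \<in> SCplus b n" using S_mult[OF gen_in[of b n n]] cn by simp
  show ?thesis
  proof (cases "D = a*B + B + 1")
    case True
    have "D = b^(n+1) + 1" using True ba unfolding B_def by (simp add: algebra_simps)
    hence "D \<in> SCplus b n" using gen_in[of b n 1] by simp
    thus ?thesis using mD gn S_add by simp
  next
    case False
    hence D3: "D \<le> a*B + B" using D2 by simp
    have "a dvd B - 1" using pow_dvd[of b n] b2 unfolding a_def B_def by simp
    hence dvi: "int a dvd int B - 1" using aB proof -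
      have "int a dvd int (B - 1)" using \<open>a dvd B - 1\<close> by (simp only: of_nat_dvd_iff)
      thus ?thesis using aB by (simp add: of_nat_diff)
    qed
    obtain h where h: "b = 2*h" using ev by blast
    obtain j s where js: "1 \<le> j" "j \<le> int a" "0 \<le> s" "s \<le> int B - 1"
        "int D = j*(int B+1) + s*int a"
    proof -
      have c1: "int a \<ge> 1" using a1 by simp
      have c2: "2 * int h = int a + 1" using h ba by simp
      have c3: "int B \<ge> int a + 1" using aB by simp
      have c4: "int a * int B + 1 \<le> int D" proof -
        have "int (a*B+1) \<le> int D" using D1 by (simp only: of_nat_le_iff)
        thus ?thesis by simp
      qed
      have c5: "int D \<le> int a * int B + int B" proof -
        have "int D \<le> int (a*B+B)" using D3 by (simp only: of_nat_le_iff)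
        thus ?thesis by simp
      qed
      show ?thesis using cover[OF c1 c2 dvi c3 c4 c5] that by blast
    qed
    obtain j' where j': "j = int j'" using js(1) zero_le_imp_eq_int[of j] by auto
    obtain s' where s': "s = int s'" using js(3) zero_le_imp_eq_int[of s] by auto
    have "int D = int (j'*(B+1) + s'*a)" using js(5) unfolding j' s' by (simp add: algebra_simps)
    hence Dv: "D = j'*(B+1) + s'*a" by (simp only: of_nat_eq_iff)
    have sB: "s' \<le> B - 1" using js(4) aB unfolding s' by linarith
    have "s'*(b-1) \<le> a*(b^n - 1)" using sB unfolding a_def B_def by (simp add: mult.commute)
    hence p1: "a*(b^(n+n)+1) + s'*(b-1) \<in> SCplus b n" using split_lemma[of b s' a n n] b2 by simp
    have p2: "j'*(b^(n+0)+1) \<in> SCplus b n" by (rule S_mult[OF gen_in])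
    have "m = (a*(b^(n+n)+1) + s'*(b-1)) + j'*(b^(n+0)+1)"
      using mD Dv cn B_def unfolding a_def[symmetric] by (simp add: algebra_simps)
    thus ?thesis using S_add[OF p1 p2] by simp
  qed
qed




lemma all_above:
  assumes b2: "b \<ge> 2" and ev: "even b" and n1: "n \<ge> 1"
  shows "(b-1)*(b^n*b^n) + (b-1)*b^n + (b-1) < m \<Longrightarrow> m \<in> SCplus b n"
proof (induction m rule: less_induct)
  case (less m)
  show ?case
  proof (cases "m \<le> (b-1)*(b^n*b^n) + (b-1)*b^n + (b-1) + (b^n + 1)")
    case True
    thus ?thesis using window_in[OF b2 ev n1 less.prems] by simp
  next
    case False
    define m' where "m' = m - (b^n + 1)"
    have "m' < m" "(b-1)*(b^n*b^n) + (b-1)*b^n + (b-1) < m'" using False unfolding m'_def by auto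
    hence "m' \<in> SCplus b n" using less.IH by blast
    moreover have "m = (b^(n+0)+1) + m'" using False unfolding m'_def by simp
    ultimately show ?thesis using S_add[OF gen_in] by metis
  qed
qed

lemma frob_gen:
  assumes b2: "b \<ge> 2" and ev: "even b" and n1: "n \<ge> 1"
  defines "F \<equiv> (b-1)*(b^n*b^n) + (b-1)*b^n + (b-1)"
  shows "Frobenius (SCplus b n) = int F \<and> Max (Apery (SCplus b n) (b^n+1)) = F + (b^n+1)"
proof
  have Fn: "F \<notin> SCplus b n" using F_notin[OF b2 ev n1] unfolding F_def .
  have ab: "\<And>m. F < m \<Longrightarrow> m \<in> SCplus b n" using all_above[OF b2 ev n1] unfolding F_def by blast
  show "Frobenius (SCplus b n) = int F" unfolding Frobenius_def
  proof (rule Greatest_equality)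
    show "int F \<notin> int ` SCplus b n" using Fn by auto
  next
    fix y assume y: "y \<notin> int ` SCplus b n"
    show "y \<le> int F"
    proof (rule ccontr)
      assume "\<not> y \<le> int F"
      then obtain m where m: "y = int m" "F < m" by (metis nonneg_int_cases not_le of_nat_0_le_iff order_trans less_imp_le zless_nat_conj nat_less_iff)
      thus False using y ab by auto
    qed
  qed
  define x where "x = F + (b^n+1)"
  have xA: "x \<in> Apery (SCplus b n) (b^n+1)" unfolding Apery_def
  proof (safe)
    show "x \<in> SCplus b n" using ab unfolding x_def by simp
  next
    fix t assume "t \<in> SCplus b n" "int t = int x - int (b^n+1)"
    hence "t = F" unfolding x_def by simp
    thus False using Fn \<open>t \<in> SCplus b n\<close> by simp
  qed
  have bd: "\<And>s. s \<in> Apery (SCplus b n) (b^n+1) \<Longrightarrow> s \<le> x"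
  proof (rule ccontr)
    fix s assume s: "s \<in> Apery (SCplus b n) (b^n+1)" "\<not> s \<le> x"
    hence "F < s - (b^n+1)" unfolding x_def by simp
    hence "s - (b^n+1) \<in> SCplus b n" using ab by simp
    moreover have "int (s - (b^n+1)) = int s - int (b^n+1)" using s(2) unfolding x_def by simp
    ultimately show False using s(1) unfolding Apery_def by blast
  qed
  have fin: "finite (Apery (SCplus b n) (b^n+1))" using bd by (meson finite_atMost finite_subset atMost_iff subsetI)
  show "Max (Apery (SCplus b n) (b^n+1)) = F + (b^n+1)"
    using Max_eqI[OF fin bd xA] unfolding x_def by simp
qed


theorem mainTheorem17:
  fixes b n :: nat
  assumes "even b" and "b \<ge> 2"
  defines "c \<equiv> \<lambda>i::nat. b ^ (n + i) + 1"
  shows "(n = 1 \<longrightarrow> Frobenius (SCplus b 1) = int b ^ 3 - 1)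
       \<and> (n \<ge> 2 \<longrightarrow>
            Max (Apery (SCplus b n) (c 0)) = c 1 + (b - 1) * c n
          \<and> Frobenius (SCplus b n) = int (c 1 + (b - 1) * c n) - int (c 0)
          \<and> Frobenius (SCplus b n) = (int b - 1) * (int b ^ (2 * n) + int b ^ n + 1))"
proof
  have b1: "int (b - 1) = int b - 1" using assms(2) by (simp add: of_nat_diff)
  show "n = 1 \<longrightarrow> Frobenius (SCplus b 1) = int b ^ 3 - 1"
  proof
    have "Frobenius (SCplus b 1) = int ((b-1)*(b^1*b^1) + (b-1)*b^1 + (b-1))"
      using frob_gen[OF assms(2) assms(1), of 1] by simp
    also have "\<dots> = (int b - 1)*(int b*int b) + (int b - 1)*int b + (int b - 1)" using b1 by simp
    also have "\<dots> = int b ^ 3 - 1" by (simp add: algebra_simps power3_eq_cube)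
    finally show "Frobenius (SCplus b 1) = int b ^ 3 - 1" .
  qed
  show "n \<ge> 2 \<longrightarrow>
            Max (Apery (SCplus b n) (c 0)) = c 1 + (b - 1) * c n
          \<and> Frobenius (SCplus b n) = int (c 1 + (b - 1) * c n) - int (c 0)
          \<and> Frobenius (SCplus b n) = (int b - 1) * (int b ^ (2 * n) + int b ^ n + 1)"
  proof
    assume n2: "n \<ge> 2"
    hence n1: "n \<ge> 1" by simp
    define F where "F = (b-1)*(b^n*b^n) + (b-1)*b^n + (b-1)"
    have fg: "Frobenius (SCplus b n) = int F" "Max (Apery (SCplus b n) (b^n+1)) = F + (b^n+1)"
      using frob_gen[OF assms(2) assms(1) n1] unfolding F_def by auto
    have c0: "c 0 = b^n + 1" unfolding c_def by simp
    have iF0: "int F = int (b-1)*(int b^n*int b^n) + int (b-1)*int b^n + int (b-1)"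
      unfolding F_def by simp
    have p2: "int b ^ (2 * n) = int b^n*int b^n" by (simp add: mult_2 power_add)
    have iF: "int F = (int b - 1) * (int b ^ (2 * n) + int b ^ n + 1)"
      unfolding iF0 b1 p2 by (simp add: algebra_simps)
    have "int (c 1 + (b - 1) * c n) = int b * int b^n + 1 + int (b-1) * (int b^n*int b^n + 1)"
      unfolding c_def of_nat_add of_nat_mult of_nat_power by (simp add: power_add)
    also have "\<dots> = int (F + (b^n+1))" unfolding of_nat_add iF0 b1 by (simp add: algebra_simps)
    finally have "int (c 1 + (b - 1) * c n) = int (F + (b^n+1))" .
    hence eq: "c 1 + (b - 1) * c n = F + (b^n+1)" by (simp only: of_nat_eq_iff)
    show "Max (Apery (SCplus b n) (c 0)) = c 1 + (b - 1) * c n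
          \<and> Frobenius (SCplus b n) = int (c 1 + (b - 1) * c n) - int (c 0)
          \<and> Frobenius (SCplus b n) = (int b - 1) * (int b ^ (2 * n) + int b ^ n + 1)"
      using fg c0 eq iF by simp
  qed
qed

end
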